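(* Let $N \ge 1$ be an integer and let $0 < \delta < \frac{1}{N}$. An $N$-level scalar quantizer is a measurable map $Q:\mathbb{R}\to\mathbb{R}$ whose range consists of $N$ points. For $\alpha>0$ and such a $Q$, define $$D(\alpha, Q) := \mathbb{E}_{X\sim \mathrm{Unif}(0,\alpha)}\big[(X-Q(X))^2\big], \qquad V(Q) := \max_{\alpha \in \{1, 1+\delta\}} D(\alpha, Q).$$ Let $Q_{\vec{p}^*(1)}$ be the $N$-level quantizer that maps each $x\in\mathbb{R}$ to the nearest point of $\{\frac{2k-1}{2N} : k=1,\dots,N\}$. This is the quantizer with $N$ equal-length cells of length $1/N$ partitioning $(0,1)$, each reconstructed at its midpoint. Let $Q^*$ be a minimax $N$-level quantizer, i.e. $Q^* \in \arg\min_{Q \text{ an } N\text{-level quantizer}} V(Q)$. Then $$D(1, Q^* ) > D\big(1, Q_{\vec{p}^*(1)}\big).$$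
   Context: $\mathrm{Unif}(0,\alpha)$ denotes the uniform distribution on $(0,\alpha)$. $D(\alpha,Q)$ is the expected squared-error distortion of $Q$ on $\mathrm{Unif}(0,\alpha)$. $V(Q)$ is the worst-case distortion over the ambiguity set $\{\mathrm{Unif}(0,1), \mathrm{Unif}(0,1+\delta)\}$. *)

theory Defs
  imports "HOL-Analysis.Analysis"
begin

definition is_quantizer :: "nat \<Rightarrow> (real \<Rightarrow> real) \<Rightarrow> bool" where
  "is_quantizer N Q \<longleftrightarrow> Q \<in> borel_measurable borel \<and> finite (range Q) \<and> card (range Q) = N"

definition distortion :: "real \<Rightarrow> (real \<Rightarrow> real) \<Rightarrow> real" where
  "distortion \<alpha> Q = (1 / \<alpha>) * (LINT x : {0<..<\<alpha>} | lborel. (x - Q x)\<^sup>2)"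

definition worst_distortion :: "real \<Rightarrow> (real \<Rightarrow> real) \<Rightarrow> real" where
  "worst_distortion \<delta> Q = max (distortion 1 Q) (distortion (1 + \<delta>) Q)"

text \<open>Nearest-point quantizer onto {(2k-1)/(2N) : k = 1..N}; on a tie (cell boundary
  k/N) the lower point is chosen.  x in ((k-1)/N, k/N] maps to (2k-1)/(2N), clamped to 1..N.\<close>
definition uniform_quantizer :: "nat \<Rightarrow> real \<Rightarrow> real" where
  "uniform_quantizer N x =
     (let k = max 1 (min (int N) \<lceil>real N * x\<rceil>) in (2 * real_of_int k - 1) / (2 * real N))"

end

theory Submission
  imports Defs
begin

lemma sq_has_integral:
  fixes a b c :: real
  assumes "a \<le> b"
  shows "((\<lambda>x. (x - c)^2) has_integral ((b-c)^3/3 - (a-c)^3/3)) {a..b}"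
proof -
  have "((\<lambda>x. (x - c)^2) has_integral ((\<lambda>x. (x-c)^3/3) b - (\<lambda>x. (x-c)^3/3) a)) {a..b}"
    apply (rule fundamental_theorem_of_calculus[OF assms])
    apply (auto intro!: derivative_eq_intros simp: power2_eq_square power3_eq_cube)
    done
  then show ?thesis by simp
qed

lemma psi_has_integral:
  fixes a b c y :: real
  assumes "a \<le> b"
  shows "((\<lambda>x. c^2 - (x - y)^2) has_integral ((c^2*(b-y) - (b-y)^3/3) - (c^2*(a-y) - (a-y)^3/3))) {a..b}"
proof -
  have "((\<lambda>x. c^2 - (x - y)^2) has_integral ((\<lambda>x. c^2*(x-y) - (x-y)^3/3) b - (\<lambda>x. c^2*(x-y) - (x-y)^3/3) a)) {a..b}"
    apply (rule fundamental_theorem_of_calculus[OF assms])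
    apply (auto intro!: derivative_eq_intros simp: power2_eq_square power3_eq_cube)
    done
  then show ?thesis by simp
qed

lemma dist_conv:
  fixes Q :: "real \<Rightarrow> real"
  assumes Qm: "Q \<in> borel_measurable borel" and fin: "finite (range Q)" and al: "\<alpha> > 0"
  shows "(\<lambda>x. (x - Q x)^2) integrable_on {0..\<alpha>}"
    and "distortion \<alpha> Q = integral {0..\<alpha>} (\<lambda>x. (x - Q x)^2) / \<alpha>"
proof -
  obtain M where M: "\<And>x. \<bar>Q x\<bar> \<le> M"
  proof -
    have "\<And>x. \<bar>Q x\<bar> \<le> Max (abs ` range Q)"
      using fin by (intro Max_ge) auto
    then show ?thesis using that by blast
  qed
  have si: "set_integrable lborel {0<..<\<alpha>} (\<lambda>x. (x - Q x)^2)"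
    unfolding set_integrable_def
  proof (rule integrableI_bounded_set[where A="{0<..<\<alpha>}" and B="(\<alpha> + M)^2"])
    show "AE x in lborel. x \<in> {0<..<\<alpha>} \<longrightarrow> norm (indicator {0<..<\<alpha>} x *\<^sub>R (x - Q x)\<^sup>2) \<le> (\<alpha> + M)\<^sup>2"
    proof (intro AE_I2 impI)
      fix x :: real assume x: "x \<in> {0<..<\<alpha>}"
      have "\<bar>x - Q x\<bar> \<le> \<alpha> + M" using x M[of x] by auto
      then have "(x - Q x)^2 \<le> (\<alpha> + M)^2"
        by (metis abs_ge_zero order_trans power2_abs power_mono)
      then show "norm (indicator {0<..<\<alpha>} x *\<^sub>R (x - Q x)\<^sup>2) \<le> (\<alpha> + M)\<^sup>2" using x by simp
    qed
  qed (use Qm al in \<open>auto simp: emeasure_lborel_Ioo\<close>)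
  note c = set_borel_integral_eq_integral[OF si]
  show "(\<lambda>x. (x - Q x)^2) integrable_on {0..\<alpha>}" using c(1) integrable_on_Icc_iff_Ioo by blast
  show "distortion \<alpha> Q = integral {0..\<alpha>} (\<lambda>x. (x - Q x)^2) / \<alpha>"
    unfolding distortion_def c(2) integral_open_interval_real by simp
qed

lemma sq_le_of_abs:
  fixes a t :: real
  assumes "0 \<le> a" "a \<le> \<bar>t\<bar>"
  shows "a^2 \<le> t^2"
  using assms by (metis power2_abs power_mono)

definition psi :: "real \<Rightarrow> real \<Rightarrow> real" where
  "psi a t = max 0 (a^2 - t^2)"

lemma G_ineq:
  fixes a p q :: real
  assumes "a > 0" "-a \<le> p" "p \<le> q" "q \<le> a"
  shows "(a^2*q - q^3/3) - (a^2*p - p^3/3) = 4*a^3/3 - ((a-q)^2*(2*a+q)/3 + (a+p)^2*(2*a-p)/3)"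
    and "(a-q)^2*(2*a+q)/3 \<ge> 0" "(a+p)^2*(2*a-p)/3 \<ge> 0"
    and "q < a \<Longrightarrow> (a-q)^2*(2*a+q)/3 > 0"
proof -
  show "(a^2*q - q^3/3) - (a^2*p - p^3/3) = 4*a^3/3 - ((a-q)^2*(2*a+q)/3 + (a+p)^2*(2*a-p)/3)"
    by (simp add: power2_eq_square power3_eq_cube field_simps)
  show "(a-q)^2*(2*a+q)/3 \<ge> 0" using assms by simp
  show "(a+p)^2*(2*a-p)/3 \<ge> 0" using assms by simp
  show "q < a \<Longrightarrow> (a-q)^2*(2*a+q)/3 > 0" using assms by simp
qed

lemma psi_integral:
  fixes a y :: real
  assumes a: "a > 0"
  shows "integral {0..1} (\<lambda>x. psi a (x - y)) \<le> 4*a^3/3"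
    and "y > 1 - a \<Longrightarrow> integral {0..1} (\<lambda>x. psi a (x - y)) < 4*a^3/3"
proof -
  define lo where "lo = max 0 (y-a)"
  define hi where "hi = min 1 (y+a)"
  have "integral {0..1} (\<lambda>x. psi a (x - y)) \<le> 4*a^3/3 \<and>
        (y > 1 - a \<longrightarrow> integral {0..1} (\<lambda>x. psi a (x - y)) < 4*a^3/3)"
  proof (cases "hi \<le> lo")
    case True
    have "\<And>x. x \<in> {0..1} \<Longrightarrow> psi a (x - y) = 0"
    proof -
      fix x :: real assume x: "x \<in> {0..1}"
      have "a \<le> \<bar>x - y\<bar>" using True x a unfolding lo_def hi_def by (auto simp: min_def max_def split: if_splits)
      then have "a^2 \<le> (x-y)^2" using a by (metis abs_of_pos power2_abs power_mono less_imp_le)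
      then show "psi a (x - y) = 0" unfolding psi_def by simp
    qed
    then have "integral {0..1} (\<lambda>x. psi a (x - y)) = 0"
      by (intro integral_unique has_integral_is_0) simp
    then show ?thesis using a by simp
  next
    case False
    have lohi: "0 \<le> lo" "lo < hi" "hi \<le> 1" using False unfolding lo_def hi_def by auto
    have i1: "((\<lambda>x. psi a (x - y)) has_integral 0) {0..lo}"
    proof (rule has_integral_spike_finite[where S="{lo}" and f="\<lambda>x. 0"])
      fix x assume x: "x \<in> {0..lo} - {lo}"
      then have "x < y - a" using lohi unfolding lo_def by (auto simp: max_def split: if_splits)
      then have "a^2 \<le> (x-y)^2" using a by (intro sq_le_of_abs) auto
      then show "psi a (x - y) = 0" unfolding psi_def by simp
    qed auto
    have i3: "((\<lambda>x. psi a (x - y)) has_integral 0) {hi..1}"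
    proof (rule has_integral_spike_finite[where S="{hi}" and f="\<lambda>x. 0"])
      fix x assume x: "x \<in> {hi..1} - {hi}"
      then have "x > y + a" using lohi unfolding hi_def by (auto simp: min_def split: if_splits)
      then have "a^2 \<le> (x-y)^2" using a by (intro sq_le_of_abs) auto
      then show "psi a (x - y) = 0" unfolding psi_def by simp
    qed auto
    define V where "V = (a^2*(hi-y) - (hi-y)^3/3) - (a^2*(lo-y) - (lo-y)^3/3)"
    have i2: "((\<lambda>x. psi a (x - y)) has_integral V) {lo..hi}"
    proof (rule has_integral_spike_finite[where S="{}" and f="\<lambda>x. a^2 - (x - y)^2"])
      fix x assume x: "x \<in> {lo..hi} - {}"
      then have "\<bar>x - y\<bar> \<le> a" unfolding lo_def hi_def by auto
      then have "(x-y)^2 \<le> a^2" using a by (metis abs_ge_zero power2_abs power_mono)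
      then show "psi a (x - y) = a^2 - (x - y)^2" unfolding psi_def by simp
    next
      show "((\<lambda>x. a^2 - (x - y)^2) has_integral V) {lo..hi}"
        unfolding V_def using psi_has_integral[of lo hi a y] lohi by simp
    qed auto
    have "((\<lambda>x. psi a (x - y)) has_integral (0 + V)) {0..hi}"
      by (rule has_integral_combine[OF _ _ i1 i2]) (use lohi in auto)
    then have "((\<lambda>x. psi a (x - y)) has_integral (0 + V + 0)) {0..1}"
      using has_integral_combine[of 0 hi 1 "\<lambda>x. psi a (x - y)" "0 + V" 0] i3 lohi by auto
    then have I: "integral {0..1} (\<lambda>x. psi a (x - y)) = V" by (simp add: integral_unique)
    have u: "-a \<le> lo - y" "lo - y \<le> hi - y" "hi - y \<le> a"
      using lohi unfolding lo_def hi_def by auto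
    note G = G_ineq[OF a u]
    have "V \<le> 4*a^3/3" unfolding V_def G(1) using G(2,3) by linarith
    moreover have "y > 1 - a \<longrightarrow> V < 4*a^3/3"
    proof
      assume "y > 1 - a"
      then have "hi - y < a" unfolding hi_def by auto
      then show "V < 4*a^3/3" unfolding V_def G(1) using G(2,3,4) by linarith
    qed
    ultimately show ?thesis using I by simp
  qed
  then show "integral {0..1} (\<lambda>x. psi a (x - y)) \<le> 4*a^3/3"
    and "y > 1 - a \<Longrightarrow> integral {0..1} (\<lambda>x. psi a (x - y)) < 4*a^3/3" by auto
qed

lemma cell_integral:
  fixes N M :: nat and F :: "real \<Rightarrow> real"
  assumes N: "N \<ge> 1"
    and F: "\<And>k x. 1 \<le> k \<Longrightarrow> k \<le> M \<Longrightarrow> (real k - 1) / real N < x \<Longrightarrow> x \<le> real k / real N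
             \<Longrightarrow> F x = (2 * real k - 1) / (2 * real N)"
  shows "m \<le> M \<Longrightarrow> ((\<lambda>x. (x - F x)^2) has_integral (real m / (12 * real N^3))) {0..real m / real N}"
proof (induction m)
  case 0
  show ?case by (simp add: has_integral_refl)
next
  case (Suc m)
  have Npos: "real N > 0" using N by simp
  define c where "c = (2 * real (Suc m) - 1) / (2 * real N)"
  have e1: "real (Suc m) / real N - c = 1 / (2 * real N)" unfolding c_def using Npos by (simp add: field_simps)
  have e2: "real m / real N - c = - (1 / (2 * real N))" unfolding c_def using Npos by (simp add: field_simps)
  have le: "real m / real N \<le> real (Suc m) / real N" using Npos by (simp add: divide_right_mono)
  have "((\<lambda>x. (x - c)^2) has_integral ((real (Suc m) / real N - c)^3/3 - (real m / real N - c)^3/3))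
          {real m / real N..real (Suc m) / real N}"
    by (rule sq_has_integral[OF le])
  also have "(real (Suc m) / real N - c)^3/3 - (real m / real N - c)^3/3 = 1 / (12 * real N^3)"
    unfolding e1 e2 using Npos by (simp add: power3_eq_cube field_simps)
  finally have h: "((\<lambda>x. (x - c)^2) has_integral (1 / (12 * real N^3))) {real m / real N..real (Suc m) / real N}" .
  have cell: "((\<lambda>x. (x - F x)^2) has_integral (1 / (12 * real N^3))) {real m / real N..real (Suc m) / real N}"
  proof (rule has_integral_spike_finite[OF _ _ h, where S="{real m / real N}"])
    fix x assume x: "x \<in> {real m / real N..real (Suc m) / real N} - {real m / real N}"
    have "F x = c" unfolding c_def
      by (rule F) (use x Suc.prems in auto)
    then show "(x - F x)^2 = (x - c)^2" by simp
  qed simp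
  have "((\<lambda>x. (x - F x)^2) has_integral (real m / (12 * real N^3) + 1 / (12 * real N^3))) {0..real (Suc m) / real N}"
    by (rule has_integral_combine[OF _ le Suc.IH cell]) (use Suc.prems in auto)
  moreover have "real m / (12 * real N^3) + 1 / (12 * real N^3) = real (Suc m) / (12 * real N^3)"
    by (simp add: add_divide_distrib)
  ultimately show ?case by simp
qed

lemma U_cells:
  fixes N :: nat
  assumes N: "N \<ge> 1" and k: "1 \<le> k" "k \<le> N" and x: "(real k - 1) / real N < x" "x \<le> real k / real N"
  shows "\<lceil>real N * x\<rceil> = int k"
proof -
  have Npos: "real N > 0" using N by simp
  have "real k - 1 < real N * x" using x(1) Npos by (simp add: field_simps)
  moreover have "real N * x \<le> real k" using x(2) Npos by (simp add: field_simps)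
  ultimately show ?thesis by (simp add: ceiling_eq_iff)
qed

lemma U_integral:
  fixes N :: nat
  assumes N: "N \<ge> 1"
  shows "((\<lambda>x. (x - uniform_quantizer N x)^2) has_integral (1 / (12 * real N^2))) {0..1}"
proof -
  have "((\<lambda>x. (x - uniform_quantizer N x)^2) has_integral (real N / (12 * real N^3))) {0..real N / real N}"
  proof (rule cell_integral[OF N _ order_refl])
    fix k x assume k: "1 \<le> k" "k \<le> N" and x: "(real k - 1) / real N < x" "x \<le> real k / real N"
    have "\<lceil>real N * x\<rceil> = int k" by (rule U_cells[OF N k x])
    then show "uniform_quantizer N x = (2 * real k - 1) / (2 * real N)"
      unfolding uniform_quantizer_def Let_def using k by simp
  qed
  moreover have "real N / (12 * real N^3) = 1 / (12 * real N^2)" using N by (simp add: power3_eq_cube power2_eq_square)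
  ultimately show ?thesis using N by simp
qed

definition Qc :: "nat \<Rightarrow> real \<Rightarrow> real \<Rightarrow> real" where
  "Qc N \<delta> x = (let k = max 1 (min (int N) \<lceil>real N * x\<rceil>) in
      (2 * real_of_int k - 1) / (2 * real N) + (if k = int N then \<delta> / 2 else 0))"

lemma Qc_integral:
  fixes N :: nat and \<delta> t :: real
  assumes N: "N \<ge> 1" and t: "1 \<le> t"
  defines "c \<equiv> (2 * real N - 1) / (2 * real N) + \<delta> / 2"
  shows "((\<lambda>x. (x - Qc N \<delta> x)^2) has_integral
           ((real N - 1) / (12 * real N^3) + ((t - c)^3/3 - ((real N - 1) / real N - c)^3/3))) {0..t}"
proof -
  have Npos: "real N > 0" using N by simp
  have A: "((\<lambda>x. (x - Qc N \<delta> x)^2) has_integral (real (N - 1) / (12 * real N^3))) {0..real (N - 1) / real N}"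
  proof (rule cell_integral[OF N _ order_refl])
    fix k x assume k: "1 \<le> k" "k \<le> N - 1" and x: "(real k - 1) / real N < x" "x \<le> real k / real N"
    have "\<lceil>real N * x\<rceil> = int k" by (rule U_cells[OF N k(1) _ x]) (use k in auto)
    moreover have "int k \<noteq> int N" using k N by auto
    ultimately show "Qc N \<delta> x = (2 * real k - 1) / (2 * real N)"
      unfolding Qc_def Let_def using k by auto
  qed
  have rN: "real (N - 1) = real N - 1" using N by simp
  have le1: "(real N - 1) / real N \<le> t"
  proof -
    have "(real N - 1) / real N \<le> 1" using Npos by (simp add: field_simps)
    then show ?thesis using t by simp
  qed
  have B: "((\<lambda>x. (x - Qc N \<delta> x)^2) has_integral ((t - c)^3/3 - ((real N - 1) / real N - c)^3/3)) {(real N - 1) / real N..t}"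
  proof (rule has_integral_spike_finite[OF _ _ sq_has_integral[OF le1], where S="{(real N - 1) / real N}"])
    fix x assume x: "x \<in> {(real N - 1) / real N..t} - {(real N - 1) / real N}"
    then have "(real N - 1) / real N < x" by auto
    then have "real N - 1 < real N * x" using Npos by (simp add: field_simps)
    then have "int N \<le> \<lceil>real N * x\<rceil>" by (simp add: le_ceiling_iff)
    then have "max 1 (min (int N) \<lceil>real N * x\<rceil>) = int N" using N by auto
    then have "Qc N \<delta> x = c" unfolding Qc_def c_def Let_def by simp
    then show "(x - Qc N \<delta> x)^2 = (x - c)^2" by simp
  qed simp
  have "0 \<le> (real N - 1) / real N" using N by simp
  from has_integral_combine[OF this le1 A[unfolded rN] B] show ?thesis by simp
qed

lemma Qc_quantizer:
  fixes N :: nat and \<delta> :: real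
  assumes N: "N \<ge> 1" and d: "\<delta> > 0"
  shows "is_quantizer N (Qc N \<delta>)"
proof -
  have Npos: "real N > 0" using N by simp
  define h where "h k = (2 * real_of_int k - 1) / (2 * real N) + (if k = int N then \<delta> / 2 else 0)" for k :: int
  define g where "g i = h (max 1 (min (int N) i))" for i :: int
  have Qeq: "Qc N \<delta> = (\<lambda>x. g \<lceil>real N * x\<rceil>)"
    unfolding Qc_def g_def h_def Let_def by auto
  have [measurable]: "g \<in> borel_measurable (count_space UNIV)" by simp
  have meas: "Qc N \<delta> \<in> borel_measurable borel" unfolding Qeq by measurable
  have rng: "range (Qc N \<delta>) = h ` {1..int N}"
  proof
    show "range (Qc N \<delta>) \<subseteq> h ` {1..int N}"
      unfolding Qeq g_def using N by auto
    show "h ` {1..int N} \<subseteq> range (Qc N \<delta>)"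
    proof
      fix z assume "z \<in> h ` {1..int N}"
      then obtain k where k: "k \<in> {1..int N}" "z = h k" by auto
      have "\<lceil>real N * ((2 * real_of_int k - 1) / (2 * real N))\<rceil> = k"
        using Npos by (simp add: ceiling_eq_iff field_simps)
      then have "Qc N \<delta> ((2 * real_of_int k - 1) / (2 * real N)) = z"
        unfolding Qeq g_def k(2) using k(1) by auto
      then show "z \<in> range (Qc N \<delta>)" by (metis rangeI)
    qed
  qed
  have mono: "h k < h l" if "k \<in> {1..int N}" "l \<in> {1..int N}" "k < l" for k l
  proof -
    have "(2 * real_of_int k - 1) / (2 * real N) < (2 * real_of_int l - 1) / (2 * real N)"
      using that Npos by (simp add: divide_strict_right_mono)
    moreover have "k \<noteq> int N" using that by auto
    ultimately show ?thesis unfolding h_def using d by auto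
  qed
  have inj: "inj_on h {1..int N}"
  proof (rule inj_onI)
    fix k l assume "k \<in> {1..int N}" "l \<in> {1..int N}" "h k = h l"
    then show "k = l" using mono[of k l] mono[of l k] by (metis less_irrefl linorder_neqE)
  qed
  have "card (range (Qc N \<delta>)) = N" unfolding rng card_image[OF inj] by simp
  then show ?thesis unfolding is_quantizer_def rng using meas by simp
qed

lemma U_quant_facts:
  fixes N :: nat
  shows "uniform_quantizer N \<in> borel_measurable borel" "finite (range (uniform_quantizer N))"
proof -
  define g where "g i = (let k = max 1 (min (int N) i) in (2 * real_of_int k - 1) / (2 * real N))" for i :: int
  have Ueq: "uniform_quantizer N = (\<lambda>x. g \<lceil>real N * x\<rceil>)"
    unfolding uniform_quantizer_def g_def by auto
  have [measurable]: "g \<in> borel_measurable (count_space UNIV)" by simp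
  show "uniform_quantizer N \<in> borel_measurable borel" unfolding Ueq by measurable
  have "range (uniform_quantizer N) \<subseteq> (\<lambda>k. (2 * real_of_int k - 1) / (2 * real N)) ` {1..max 1 (int N)}"
    unfolding uniform_quantizer_def Let_def by auto
  then show "finite (range (uniform_quantizer N))" by (rule finite_subset) simp
qed

lemma final_arith:
  fixes a \<delta> :: real
  assumes a: "0 < a" "a \<le> 1/2" and d: "0 < \<delta>"
  shows "(a^2/3 - 2*a^3/3 + ((a - \<delta>/2)^3/3 + (a + \<delta>/2)^3/3)) * (1 + \<delta>) < a^2/3 + ((\<delta> + a)^3 - a^3)/3"
    and "a^2/3 - 2*a^3/3 + ((a + \<delta>/2)^3/3 + (a + \<delta>/2)^3/3) < a^2/3 + ((\<delta> + a)^3 - a^3)/3"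
proof -
  have e1: "a^2/3 + ((\<delta> + a)^3 - a^3)/3 - (a^2/3 - 2*a^3/3 + ((a - \<delta>/2)^3/3 + (a + \<delta>/2)^3/3)) * (1 + \<delta>)
      = \<delta> * (2*a^2/3 + a*\<delta>/2 + \<delta>^2*(1/3 - a/2))"
    by (simp add: field_simps power2_eq_square power3_eq_cube)
  have "0 < \<delta> * (2*a^2/3 + a*\<delta>/2 + \<delta>^2*(1/3 - a/2))"
    using a d by (intro mult_pos_pos add_pos_pos) auto
  then show "(a^2/3 - 2*a^3/3 + ((a - \<delta>/2)^3/3 + (a + \<delta>/2)^3/3)) * (1 + \<delta>) < a^2/3 + ((\<delta> + a)^3 - a^3)/3"
    using e1 by linarith
  have e2: "a^2/3 + ((\<delta> + a)^3 - a^3)/3 - (a^2/3 - 2*a^3/3 + ((a + \<delta>/2)^3/3 + (a + \<delta>/2)^3/3))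
      = \<delta>^2 * (a/2 + \<delta>/4)"
    by (simp add: field_simps power2_eq_square power3_eq_cube)
  have "0 < \<delta>^2 * (a/2 + \<delta>/4)" using a d by simp
  then show "a^2/3 - 2*a^3/3 + ((a + \<delta>/2)^3/3 + (a + \<delta>/2)^3/3) < a^2/3 + ((\<delta> + a)^3 - a^3)/3"
    using e2 by linarith
qed

theorem theorem1:
  fixes N :: nat and \<delta> :: real and Qstar :: "real \<Rightarrow> real"
  assumes "N \<ge> 1"
    and "0 < \<delta>" and "\<delta> < 1 / real N"
    and "is_quantizer N Qstar"
    and "\<And>Q. is_quantizer N Q \<Longrightarrow> worst_distortion \<delta> Qstar \<le> worst_distortion \<delta> Q"
  shows "distortion 1 Qstar > distortion 1 (uniform_quantizer N)"
proof (rule ccontr)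
  assume neg: "\<not> distortion 1 Qstar > distortion 1 (uniform_quantizer N)"
  have N: "N \<ge> 1" and d: "0 < \<delta>" using assms by auto
  have Npos: "real N > 0" using N by simp
  define a where "a = 1 / (2 * real N)"
  have apos: "a > 0" unfolding a_def using Npos by simp
  have ahalf: "a \<le> 1/2" unfolding a_def using N by (simp add: field_simps)
  have Na: "real N * a = 1/2" unfolding a_def using Npos by simp
  have Qm: "Qstar \<in> borel_measurable borel" and fin: "finite (range Qstar)" and card: "card (range Qstar) = N"
    using assms(4) unfolding is_quantizer_def by auto
  define f where "f x = (x - Qstar x)^2" for x
  have i1: "f integrable_on {0..1}" and D1: "distortion 1 Qstar = integral {0..1} f"
    using dist_conv[OF Qm fin, of 1] unfolding f_def by auto
  have i2: "f integrable_on {0..1+\<delta>}" and D2: "distortion (1+\<delta>) Qstar = integral {0..1+\<delta>} f / (1+\<delta>)"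
    using dist_conv[OF Qm fin, of "1+\<delta>"] d unfolding f_def by auto
  have DU: "distortion 1 (uniform_quantizer N) = 1 / (12 * real N^2)"
    using dist_conv(2)[OF U_quant_facts, of 1] integral_unique[OF U_integral[OF N]] by simp
  have a2: "1 / (12 * real N^2) = a^2/3" unfolding a_def by (simp add: power2_eq_square)
  have E1le: "integral {0..1} f \<le> a^2/3" using neg D1 DU a2 by simp
  define Y where "Y = range Qstar"
  have pw: "a^2 - (\<Sum>y\<in>Y. psi a (x - y)) \<le> f x" for x
  proof -
    have psi0: "\<And>t. psi a t \<ge> 0" unfolding psi_def by simp
    have mem: "Qstar x \<in> Y" unfolding Y_def by simp
    have sum_ge: "psi a (x - Qstar x) \<le> (\<Sum>y\<in>Y. psi a (x - y))"
      using member_le_sum[OF mem, of "\<lambda>y. psi a (x - y)"] psi0 fin unfolding Y_def by simp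
    show ?thesis
    proof (cases "a \<le> \<bar>x - Qstar x\<bar>")
      case True
      then have "a^2 \<le> f x" unfolding f_def using apos by (intro sq_le_of_abs) auto
      moreover have "0 \<le> (\<Sum>y\<in>Y. psi a (x - y))" using psi0 by (simp add: sum_nonneg)
      ultimately show ?thesis by linarith
    next
      case False
      then have "(x - Qstar x)^2 \<le> a^2" using apos by (metis abs_ge_zero power2_abs power_mono less_imp_le not_le)
      then have "psi a (x - Qstar x) = a^2 - f x" unfolding psi_def f_def by simp
      then show ?thesis using sum_ge by linarith
    qed
  qed
  have ipsi: "(\<lambda>x. psi a (x - y)) integrable_on {0..1}" for y
    by (rule integrable_continuous_real) (unfold psi_def, intro continuous_intros)
  have isum: "(\<lambda>x. \<Sum>y\<in>Y. psi a (x - y)) integrable_on {0..1}"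
    using ipsi by (intro integrable_sum) (use fin Y_def in auto)
  have low: "integral {0..1} (\<lambda>x. a^2 - (\<Sum>y\<in>Y. psi a (x - y))) \<le> integral {0..1} f"
    by (rule integral_le[OF integrable_diff[OF integrable_const_ivl isum] i1]) (use pw in auto)
  have eqint: "integral {0..1} (\<lambda>x. a^2 - (\<Sum>y\<in>Y. psi a (x - y))) = a^2 - (\<Sum>y\<in>Y. integral {0..1} (\<lambda>x. psi a (x - y)))"
    using integral_diff[OF integrable_const_ivl isum] integral_sum[of Y "\<lambda>y x. psi a (x - y)" "{0..1}"] fin ipsi
    unfolding Y_def by simp
  have cY: "real (card Y) * (4*a^3/3) = 2*a^2/3" unfolding Y_def card using Na
    by (simp add: power2_eq_square power3_eq_cube field_simps)
  have allY: "\<forall>y\<in>Y. y \<le> 1 - a"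
  proof (rule ccontr)
    assume "\<not> (\<forall>y\<in>Y. y \<le> 1 - a)"
    then obtain y0 where y0: "y0 \<in> Y" "y0 > 1 - a" by (auto simp: not_le)
    have "(\<Sum>y\<in>Y. integral {0..1} (\<lambda>x. psi a (x - y))) < (\<Sum>y\<in>Y. 4*a^3/3)"
      by (rule sum_strict_mono_ex1) (use fin Y_def psi_integral[OF apos] y0 in auto)
    then have "integral {0..1} f > a^2/3" using low eqint cY by simp
    then show False using E1le by simp
  qed
  have "(\<Sum>y\<in>Y. integral {0..1} (\<lambda>x. psi a (x - y))) \<le> (\<Sum>y\<in>Y. 4*a^3/3)"
    by (rule sum_mono) (use psi_integral[OF apos] in auto)
  then have E1ge: "integral {0..1} f \<ge> a^2/3" using low eqint cY by simp
  have itail: "f integrable_on {1..1+\<delta>}" by (rule integrable_on_subinterval[OF i2]) auto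
  have tailg: "((\<lambda>x. (x - (1 - a))^2) has_integral ((1+\<delta>-(1-a))^3/3 - (1-(1-a))^3/3)) {1..1+\<delta>}"
    by (rule sq_has_integral) (use d in auto)
  have tail: "integral {1..1+\<delta>} f \<ge> ((\<delta> + a)^3 - a^3)/3"
  proof -
    have "integral {1..1+\<delta>} (\<lambda>x. (x - (1 - a))^2) \<le> integral {1..1+\<delta>} f"
    proof (rule integral_le[OF has_integral_integrable[OF tailg] itail])
      fix x assume x: "x \<in> {1..1+\<delta>}"
      have "Qstar x \<le> 1 - a" using allY unfolding Y_def by auto
      then have "0 \<le> x - (1 - a)" "x - (1 - a) \<le> x - Qstar x" using x apos by auto
      then show "(x - (1 - a))^2 \<le> f x" unfolding f_def by (metis power_mono)
    qed
    moreover have "integral {1..1+\<delta>} (\<lambda>x. (x - (1 - a))^2) = ((\<delta> + a)^3 - a^3)/3"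
      using integral_unique[OF tailg] by (simp add: diff_divide_distrib add.commute)
    ultimately show ?thesis by simp
  qed
  have E2: "integral {0..1+\<delta>} f = integral {0..1} f + integral {1..1+\<delta>} f"
    using Henstock_Kurzweil_Integration.integral_combine[where a=0 and c=1 and b="1+\<delta>" and f=f] i2 d by simp
  define T where "T = a^2/3 + ((\<delta> + a)^3 - a^3)/3"
  have E2ge: "integral {0..1+\<delta>} f \<ge> T" unfolding T_def E2 using E1ge tail by linarith
  have Vstar: "worst_distortion \<delta> Qstar \<ge> T / (1+\<delta>)"
  proof -
    have "T / (1+\<delta>) \<le> integral {0..1+\<delta>} f / (1+\<delta>)" using E2ge d by (simp add: divide_right_mono)
    then show ?thesis unfolding worst_distortion_def D2 by simp
  qed
  have qc: "is_quantizer N (Qc N \<delta>)" by (rule Qc_quantizer[OF N d])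
  have Qcm: "Qc N \<delta> \<in> borel_measurable borel" and Qcfin: "finite (range (Qc N \<delta>))"
    using qc unfolding is_quantizer_def by auto
  define c where "c = (2 * real N - 1) / (2 * real N) + \<delta> / 2"
  have P: "(real N - 1) / (12 * real N^3) = a^2/3 - 2*a^3/3" unfolding a_def using Npos
    by (simp add: field_simps power2_eq_square power3_eq_cube)
  have c1: "1 - c = a - \<delta>/2" unfolding c_def a_def using Npos by (simp add: field_simps)
  have c2: "(real N - 1) / real N - c = -(a + \<delta>/2)" unfolding c_def a_def using Npos by (simp add: field_simps)
  have c3: "1 + \<delta> - c = a + \<delta>/2" unfolding c_def a_def using Npos by (simp add: field_simps)
  have cube_neg: "(-(a + \<delta>/2))^3 = -((a + \<delta>/2)^3)" by (rule power_minus_odd) simp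
  have QD1: "distortion 1 (Qc N \<delta>) = a^2/3 - 2*a^3/3 + ((a - \<delta>/2)^3/3 + (a + \<delta>/2)^3/3)"
    using dist_conv(2)[OF Qcm Qcfin, of 1] integral_unique[OF Qc_integral[OF N order_refl, of \<delta>]]
    unfolding c_def[symmetric] P c1 c2 cube_neg by simp
  have QD2: "distortion (1+\<delta>) (Qc N \<delta>) = (a^2/3 - 2*a^3/3 + ((a + \<delta>/2)^3/3 + (a + \<delta>/2)^3/3)) / (1+\<delta>)"
  proof -
    have "1 \<le> 1 + \<delta>" using d by simp
    from integral_unique[OF Qc_integral[OF N this, of \<delta>]] dist_conv(2)[OF Qcm Qcfin, of "1+\<delta>"] d
    show ?thesis unfolding c_def[symmetric] P c3 c2 cube_neg by simp
  qed
  note fa = final_arith[OF apos ahalf d]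
  have "distortion 1 (Qc N \<delta>) < T / (1+\<delta>)"
    unfolding QD1 T_def using fa(1) d by (simp add: field_simps)
  moreover have "distortion (1+\<delta>) (Qc N \<delta>) < T / (1+\<delta>)"
    unfolding QD2 T_def using fa(2) d by (simp add: divide_strict_right_mono)
  ultimately have "worst_distortion \<delta> (Qc N \<delta>) < T / (1+\<delta>)"
    unfolding worst_distortion_def by simp
  moreover have "worst_distortion \<delta> Qstar \<le> worst_distortion \<delta> (Qc N \<delta>)" by (rule assms(5)[OF qc])
  ultimately show False using Vstar by simp
qed

end
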